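(* Let $\phi_n(x)=\sqrt{\tfrac{2n+1}{2}}\,P_n(x)$, $n\ge0$, be the orthonormal Legendre polynomials on $[-1,1]$, and consider separated Robin boundary conditions $a_+u(1)+b_+u'(1)=0$ and $a_-u(-1)+b_-u'(-1)=0$ with real constants satisfying $a_+b_+>0$ and $a_-b_-<0$. Set $b_{0,n}=a_+\phi_n(1)+b_+\phi_n'(1)$ and $b_{1,n}=a_-\phi_n(-1)+b_-\phi_n'(-1)$. Then there is a unique unit lower-triangular matrix $A=(a_{m,k})_{m,k\ge0}$ with lower bandwidth $2$ satisfying $b_{i,k}+b_{i,k+1}a_{k+1,k}+b_{i,k+2}a_{k+2,k}=0$ for $i=0,1$ and all $k\ge0$, and $A$ is a bounded operator on $\ell^2$.
   Context: $P_n$ is the Legendre polynomial of degree $n$ with the standard normalization $P_n(1)=1$. "Unit lower-triangular with lower bandwidth 2" means $a_{k,k}=1$ and $a_{m,k}=0$ unless $k\le m\le k+2$. $\ell^2$ is the space of square-summable sequences indexed from $0$. *)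

theory Defs
  imports "HOL-Analysis.Analysis" "HOL-Computational_Algebra.Polynomial"
begin

fun legendre :: "nat \<Rightarrow> real poly" where
  "legendre 0 = 1"
| "legendre (Suc 0) = [:0, 1:]"
| "legendre (Suc (Suc n)) =
     smult (1 / real (n + 2))
       (smult (real (2 * n + 3)) ([:0, 1:] * legendre (Suc n)) - smult (real (n + 1)) (legendre n))"

definition phi :: "nat \<Rightarrow> real \<Rightarrow> real" where
  "phi n x = sqrt ((2 * real n + 1) / 2) * poly (legendre n) x"

definition phi' :: "nat \<Rightarrow> real \<Rightarrow> real" where
  "phi' n x = sqrt ((2 * real n + 1) / 2) * poly (pderiv (legendre n)) x"

definition unit_lower_band2 :: "(nat \<Rightarrow> nat \<Rightarrow> real) \<Rightarrow> bool" where
  "unit_lower_band2 A \<longleftrightarrow> (\<forall>k. A k k = 1) \<and> (\<forall>m k. \<not> (k \<le> m \<and> m \<le> k + 2) \<longrightarrow> A m k = 0)"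

definition lt_apply :: "(nat \<Rightarrow> nat \<Rightarrow> real) \<Rightarrow> (nat \<Rightarrow> real) \<Rightarrow> nat \<Rightarrow> real" where
  "lt_apply A x m = (\<Sum>k\<le>m. A m k * x k)"

definition l2_bounded :: "(nat \<Rightarrow> nat \<Rightarrow> real) \<Rightarrow> bool" where
  "l2_bounded A \<longleftrightarrow> (\<exists>C. \<forall>x. summable (\<lambda>k. (x k)\<^sup>2) \<longrightarrow>
      summable (\<lambda>m. (lt_apply A x m)\<^sup>2) \<and>
      (\<Sum>m. (lt_apply A x m)\<^sup>2) \<le> C\<^sup>2 * (\<Sum>k. (x k)\<^sup>2))"

end

theory Submission imports Defs begin

lemma leg1: "poly (legendre n) 1 = 1 \<and> poly (pderiv (legendre n)) 1 = real n * (real n + 1) / 2"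
proof (induction n rule: legendre.induct)
  case (3 n)
  then show ?case by (simp add: pderiv_diff pderiv_mult pderiv_smult pderiv_pCons field_simps)
qed (auto simp: pderiv_pCons)

lemma legm1: "poly (legendre n) (-1) = (-1)^n \<and> poly (pderiv (legendre n)) (-1) = (-1)^(n+1) * (real n * (real n + 1) / 2)"
proof (induction n rule: legendre.induct)
  case (3 n)
  then obtain h1: "poly (legendre (Suc n)) (-1) = (-1)^(Suc n)"
    and h2: "poly (pderiv (legendre (Suc n))) (-1) = (-1)^(Suc n+1) * (real (Suc n) * (real (Suc n) + 1) / 2)"
    and h3: "poly (legendre n) (-1) = (-1)^n"
    and h4: "poly (pderiv (legendre n)) (-1) = (-1)^(n+1) * (real n * (real n + 1) / 2)" by blast
  show ?case by (simp add: pderiv_diff pderiv_mult pderiv_smult pderiv_pCons h1 h2 h3 h4 del: power_Suc) (simp add: field_simps)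
qed (auto simp: pderiv_pCons)

lemma key:
  fixes c0 c1 c2 F0 F1 F2 G0 G1 G2 x y :: real
  assumes "0<c0" "c0\<le>c1" "c1\<le>c2" "0<F0" "F0\<le>F1" "F1\<le>F2" "0<G0" "G0\<le>G1" "G1\<le>G2"
   and h0: "c0*F0 + c1*F1*x + c2*F2*y = 0" and h1: "c0*G0 - c1*G1*x + c2*G2*y = 0"
  shows "\<bar>x\<bar> \<le> 1 \<and> \<bar>y\<bar> \<le> 1"
proof -
  define D where "D = F1*G2 + G1*F2"
  have Dp: "D > 0" using assms unfolding D_def by (simp add: add_pos_pos)
  have "c1*x*D - c0*(G0*F2 - F0*G2) = G2 * (c0*F0 + c1*F1*x + c2*F2*y) - F2*(c0*G0 - c1*G1*x + c2*G2*y)"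
    unfolding D_def by (simp add: algebra_simps)
  hence ex: "c1*x*D = c0*(G0*F2 - F0*G2)" using h0 h1 by simp
  have "G0*F2 \<le> G1*F2" "F0*G2 \<le> F1*G2" "0 \<le> G0*F2" "0 \<le> F0*G2"
    using assms by (auto intro!: mult_right_mono)
  hence "\<bar>G0*F2 - F0*G2\<bar> \<le> D" unfolding D_def by linarith
  hence "\<bar>c0*(G0*F2 - F0*G2)\<bar> \<le> c0 * D" using assms by (simp add: abs_mult)
  also have "\<dots> \<le> c1 * D" using assms Dp by simp
  finally have "\<bar>c1*x*D\<bar> \<le> c1*D" using ex by simp
  moreover have "\<bar>c1*x*D\<bar> = (c1*D) * \<bar>x\<bar>" using assms Dp by (simp add: abs_mult)
  ultimately have "(c1*D) * \<bar>x\<bar> \<le> (c1*D) * 1" by simp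
  hence x: "\<bar>x\<bar> \<le> 1" using assms Dp by (simp add: mult_le_cancel_left_pos)
  have "c2*y*D + c0*(F0*G1 + G0*F1) = G1 * (c0*F0 + c1*F1*x + c2*F2*y) + F1*(c0*G0 - c1*G1*x + c2*G2*y)"
    unfolding D_def by (simp add: algebra_simps)
  hence ey: "c2*y*D = - (c0*(F0*G1 + G0*F1))" using h0 h1 by simp
  have "F0*G1 \<le> F2*G1" "G0*F1 \<le> G2*F1" "0 \<le> G0*F1" "0 \<le> F0*G1"
    using assms by (auto intro!: mult_right_mono)
  hence "\<bar>F0*G1 + G0*F1\<bar> \<le> D" unfolding D_def by (simp add: algebra_simps)
  hence "\<bar>c0*(F0*G1 + G0*F1)\<bar> \<le> c0 * D" using assms by (simp add: abs_mult)
  also have "\<dots> \<le> c2 * D" using assms Dp by simp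
  finally have "\<bar>c2*y*D\<bar> \<le> c2*D" using ey by simp
  moreover have "\<bar>c2*y*D\<bar> = (c2*D) * \<bar>y\<bar>" using assms Dp by (simp add: abs_mult)
  ultimately have "(c2*D) * \<bar>y\<bar> \<le> (c2*D) * 1" by simp
  hence "\<bar>y\<bar> \<le> 1" using assms Dp by (simp add: mult_le_cancel_left_pos)
  with x show ?thesis by simp
qed

lemma lt_band:
  assumes "unit_lower_band2 A"
  shows "lt_apply A x m = x m + (if 1 \<le> m then A m (m-1) * x (m-1) else 0)
           + (if 2 \<le> m then A m (m-2) * x (m-2) else 0)"
proof (cases m)
  case 0 thus ?thesis using assms by (simp add: lt_apply_def unit_lower_band2_def)
next
  case (Suc n) note m = this
  show ?thesis
  proof (cases n)
    case 0 thus ?thesis using assms m by (simp add: lt_apply_def unit_lower_band2_def)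
  next
    case (Suc p)
    have z: "(\<Sum>k<p. A (Suc (Suc p)) k * x k) = 0"
      using assms unfolding unit_lower_band2_def by (intro sum.neutral) auto
    have "lt_apply A x m = (\<Sum>k<p. A (Suc (Suc p)) k * x k) + A (Suc (Suc p)) p * x p
        + A (Suc (Suc p)) (Suc p) * x (Suc p) + A (Suc (Suc p)) (Suc (Suc p)) * x (Suc (Suc p))"
      unfolding lt_apply_def m Suc by (simp add: lessThan_Suc_atMost[symmetric])
    thus ?thesis using z assms m Suc by (simp add: unit_lower_band2_def)
  qed
qed

lemma sq3: "((a::real) + b + c)^2 \<le> 3 * (a^2 + b^2 + c^2)"
proof -
  have "0 \<le> (a-b)^2 + (b-c)^2 + (a-c)^2" by simp
  thus ?thesis by (simp add: power2_eq_square algebra_simps)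
qed

lemma l2b:
  assumes "unit_lower_band2 A" and bd: "\<And>m k. \<bar>A m k\<bar> \<le> 1"
  shows "l2_bounded A"
  unfolding l2_bounded_def
proof (intro exI allI impI)
  fix x :: "nat \<Rightarrow> real"
  assume sx: "summable (\<lambda>k. (x k)\<^sup>2)"
  define s1 where "s1 m = (if 1 \<le> m then (x (m-1))^2 else 0)" for m
  define s2 where "s2 m = (if 2 \<le> m then (x (m-2))^2 else 0)" for m
  have e1: "(\<lambda>n. s1 (n + 1)) = (\<lambda>k. (x k)\<^sup>2)" by (auto simp: s1_def)
  have e2: "(\<lambda>n. s2 (n + 2)) = (\<lambda>k. (x k)\<^sup>2)" by (auto simp: s2_def)
  have ss1: "summable s1" using sx e1 summable_iff_shift[of s1 1] by simp
  have ss2: "summable s2" using sx e2 summable_iff_shift[of s2 2] by simp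
  have su1: "suminf s1 = (\<Sum>k. (x k)\<^sup>2)"
    using suminf_split_initial_segment[OF ss1, of 1] e1 by (simp add: s1_def)
  have su2: "suminf s2 = (\<Sum>k. (x k)\<^sup>2)"
    using suminf_split_initial_segment[OF ss2, of 2] e2 by (simp add: s2_def eval_nat_numeral)
  define g where "g m = 3 * ((x m)^2 + s1 m + s2 m)" for m
  have sg: "summable g" unfolding g_def
    by (intro summable_mult summable_add sx ss1 ss2)
  have sq1: "(a * y)^2 \<le> y^2" if "\<bar>a\<bar> \<le> 1" for a y :: real
  proof -
    have "a^2 \<le> 1" using that by (metis abs_le_square_iff abs_one power_one)
    hence "a^2 * y^2 \<le> 1 * y^2" by (intro mult_right_mono) auto
    thus ?thesis by (simp add: power_mult_distrib)
  qed
  have le: "(lt_apply A x m)\<^sup>2 \<le> g m" for m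
  proof -
    have "(lt_apply A x m)\<^sup>2 \<le> 3 * ((x m)^2 + (if 1 \<le> m then A m (m-1) * x (m-1) else 0)^2
           + (if 2 \<le> m then A m (m-2) * x (m-2) else 0)^2)"
      unfolding lt_band[OF assms(1)] by (rule sq3)
    also have "\<dots> \<le> g m" unfolding g_def s1_def s2_def
      using sq1[OF bd[of m "m-1"], of "x (m-1)"] sq1[OF bd[of m "m-2"], of "x (m-2)"] by auto
    finally show ?thesis .
  qed
  have sl: "summable (\<lambda>m. (lt_apply A x m)\<^sup>2)"
    by (rule summable_comparison_test[OF _ sg]) (use le in auto)
  show "summable (\<lambda>m. (lt_apply A x m)\<^sup>2) \<and>
      (\<Sum>m. (lt_apply A x m)\<^sup>2) \<le> 3\<^sup>2 * (\<Sum>k. (x k)\<^sup>2)"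
  proof
    show "summable (\<lambda>m. (lt_apply A x m)\<^sup>2)" by (rule sl)
    have "(\<Sum>m. (lt_apply A x m)\<^sup>2) \<le> suminf g" by (rule suminf_le[OF le sl sg])
    also have "suminf g = 3 * ((\<Sum>k. (x k)\<^sup>2) + suminf s1 + suminf s2)"
    proof -
      have "suminf g = 3 * (\<Sum>m. (x m)^2 + s1 m + s2 m)"
        unfolding g_def by (rule suminf_mult) (intro summable_add sx ss1 ss2)
      also have "(\<Sum>m. (x m)^2 + s1 m + s2 m) = (\<Sum>m. (x m)^2 + s1 m) + suminf s2"
        by (rule suminf_add[symmetric]) (intro summable_add sx ss1 ss2)+
      also have "(\<Sum>m. (x m)^2 + s1 m) = (\<Sum>k. (x k)\<^sup>2) + suminf s1"
        by (rule suminf_add[symmetric]) (intro summable_add sx ss1 ss2)+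
      finally show ?thesis .
    qed
    also have "\<dots> = 3\<^sup>2 * (\<Sum>k. (x k)\<^sup>2)" by (simp add: su1 su2)
    finally show "(\<Sum>m. (lt_apply A x m)\<^sup>2) \<le> 3\<^sup>2 * (\<Sum>k. (x k)\<^sup>2)" .
  qed
qed

lemma lin_uniq:
  fixes p q a b c d x y x' y' :: real
  assumes "a*d - b*c \<noteq> 0" "p + a*x + b*y = 0" "q + c*x + d*y = 0"
    "p + a*x' + b*y' = 0" "q + c*x' + d*y' = 0"
  shows "x = x' \<and> y = y'"
proof -
  have "(a*d - b*c) * (x - x') = d*((p + a*x + b*y) - (p + a*x' + b*y')) - b*((q + c*x + d*y) - (q + c*x' + d*y'))"
    by (simp add: algebra_simps)
  hence "(a*d - b*c) * (x - x') = 0" using assms by simp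
  hence 1: "x = x'" using assms(1) by simp
  have "(a*d - b*c) * (y - y') = a*((q + c*x + d*y) - (q + c*x' + d*y')) - c*((p + a*x + b*y) - (p + a*x' + b*y'))"
    by (simp add: algebra_simps)
  hence "(a*d - b*c) * (y - y') = 0" using assms by simp
  hence "y = y'" using assms(1) by simp
  with 1 show ?thesis by simp
qed

lemma lin_ex:
  fixes p q a b c d :: real
  assumes "a*d - b*c \<noteq> 0"
  shows "p + a*((b*q - d*p)/(a*d - b*c)) + b*((c*p - a*q)/(a*d - b*c)) = 0 \<and>
         q + c*((b*q - d*p)/(a*d - b*c)) + d*((c*p - a*q)/(a*d - b*c)) = 0"
  using assms by (simp add: field_simps)

theorem mainTheorem2:
  fixes ap bp am bm :: real and b :: "nat \<Rightarrow> nat \<Rightarrow> real"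
  assumes "ap * bp > 0" and "am * bm < 0"
    and "\<And>n. b 0 n = ap * phi n 1 + bp * phi' n 1"
    and "\<And>n. b 1 n = am * phi n (-1) + bm * phi' n (-1)"
  defines "P \<equiv> \<lambda>A. unit_lower_band2 A \<and>
      (\<forall>i\<in>{0,1}. \<forall>k. b i k + b i (k+1) * A (k+1) k + b i (k+2) * A (k+2) k = 0)"
  shows "(\<exists>!A. P A) \<and> (\<forall>A. P A \<longrightarrow> l2_bounded A)"
proof -
  define t where "t n = real n * (real n + 1) / 2" for n
  define c where "c n = sqrt ((2 * real n + 1) / 2)" for n
  define F where "F n = \<bar>ap\<bar> + \<bar>bp\<bar> * t n" for n
  define G where "G n = \<bar>am\<bar> + \<bar>bm\<bar> * t n" for n
  define sf where "sf = sgn ap"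
  define sg where "sg = sgn am"
  have t0: "0 \<le> t n" for n unfolding t_def by simp
  have tm: "t n \<le> t (Suc n)" for n unfolding t_def by (simp add: field_simps mult_mono)
  have cp: "0 < c n" for n unfolding c_def by simp
  have cm: "c n \<le> c (Suc n)" for n unfolding c_def by simp
  have ap0: "ap \<noteq> 0" "am \<noteq> 0" using assms(1,2) by auto
  have Fp: "0 < F n" for n unfolding F_def using t0[of n] ap0 by (simp add: add_pos_nonneg)
  have Gp: "0 < G n" for n unfolding G_def using t0[of n] ap0 by (simp add: add_pos_nonneg)
  have Fm: "F n \<le> F (Suc n)" for n unfolding F_def using tm[of n] by (simp add: mult_left_mono)
  have Gm: "G n \<le> G (Suc n)" for n unfolding G_def using tm[of n] by (simp add: mult_left_mono)
  have sf2: "sf * sf = 1" "sg * sg = 1" unfolding sf_def sg_def using ap0 by (auto simp: sgn_if)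
  have fF: "ap + bp * t n = sf * F n" for n
  proof (cases "ap > 0")
    case True hence "bp > 0" using assms(1) by (metis zero_less_mult_pos)
    thus ?thesis using True by (simp add: sf_def F_def)
  next
    case False hence "ap < 0" using ap0 by simp
    moreover hence "bp < 0" using assms(1) by (simp add: zero_less_mult_iff)
    ultimately show ?thesis by (simp add: sf_def F_def)
  qed
  have gG: "am - bm * t n = sg * G n" for n
  proof (cases "am > 0")
    case True hence "bm < 0" using assms(2) by (metis mult_less_0_iff not_less_iff_gr_or_eq)
    thus ?thesis using True by (simp add: sg_def G_def)
  next
    case False hence "am < 0" using ap0 by simp
    moreover hence "bm > 0" using assms(2) by (metis mult_less_0_iff not_less_iff_gr_or_eq)
    ultimately show ?thesis by (simp add: sg_def G_def)
  qed
  have b0: "b 0 n = c n * (sf * F n)" for n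
  proof -
    have "b 0 n = c n * (ap + bp * t n)"
      using assms(3)[of n] leg1[of n] unfolding phi_def phi'_def c_def t_def by (simp add: algebra_simps)
    thus ?thesis using fF by simp
  qed
  have b1: "b 1 n = c n * (-1)^n * (sg * G n)" for n
  proof -
    have "b 1 n = c n * (-1)^n * (am - bm * t n)"
      using assms(4)[of n] legm1[of n] unfolding phi_def phi'_def c_def t_def by (simp add: algebra_simps) (simp add: field_simps)
    thus ?thesis using gG by simp
  qed
  have b1': "b (Suc 0) n = c n * (-1)^n * (sg * G n)" for n using b1[of n] by simp
  have det: "b 0 (k+1) * b 1 (k+2) - b 0 (k+2) * b 1 (k+1) \<noteq> 0" for k
  proof -
    have "b 0 (k+1) * b 1 (k+2) - b 0 (k+2) * b 1 (k+1)
        = (c (Suc k) * c (Suc (Suc k)) * sf * sg * (-1)^k) * (F (Suc k) * G (Suc (Suc k)) + F (Suc (Suc k)) * G (Suc k))"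
      by (simp add: b0 b1 b1' algebra_simps)
    moreover have "F (Suc k) * G (Suc (Suc k)) + F (Suc (Suc k)) * G (Suc k) > 0"
      using Fp Gp by (simp add: add_pos_pos)
    moreover have "sf \<noteq> 0" "sg \<noteq> 0" using sf2 by auto
    moreover have "c (Suc k) \<noteq> 0" "c (Suc (Suc k)) \<noteq> 0" using cp by (metis less_irrefl)+
    ultimately show ?thesis by simp
  qed
  have bnd: "\<bar>x\<bar> \<le> 1 \<and> \<bar>y\<bar> \<le> 1"
    if e0: "b 0 k + b 0 (k+1) * x + b 0 (k+2) * y = 0" and e1: "b 1 k + b 1 (k+1) * x + b 1 (k+2) * y = 0" for k x y
  proof (rule key)
    have "sf * (b 0 k + b 0 (k+1) * x + b 0 (k+2) * y) = (sf * sf) *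
       (c k * F k + c (Suc k) * F (Suc k) * x + c (Suc (Suc k)) * F (Suc (Suc k)) * y)"
      by (simp add: b0 algebra_simps)
    thus "c k * F k + c (Suc k) * F (Suc k) * x + c (Suc (Suc k)) * F (Suc (Suc k)) * y = 0"
      using e0 sf2 by simp
    have ee: "(-1::real)^k * (-1)^k = 1" by (simp add: power_mult_distrib[symmetric])
    have "((-1)^k * sg) * (b 1 k + b 1 (k+1) * x + b 1 (k+2) * y) = ((-1::real)^k * (-1)^k) * (sg * sg) *
       (c k * G k - c (Suc k) * G (Suc k) * x + c (Suc (Suc k)) * G (Suc (Suc k)) * y)"
      by (simp add: b1 b1' algebra_simps)
    thus "c k * G k - c (Suc k) * G (Suc k) * x + c (Suc (Suc k)) * G (Suc (Suc k)) * y = 0"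
      using e1 sf2 ee by simp
  qed (use cp cm Fp Fm Gp Gm in auto)
  define X where "X k = (b 0 (k+2) * b 1 k - b 1 (k+2) * b 0 k) / (b 0 (k+1) * b 1 (k+2) - b 0 (k+2) * b 1 (k+1))" for k
  define Y where "Y k = (b 1 (k+1) * b 0 k - b 0 (k+1) * b 1 k) / (b 0 (k+1) * b 1 (k+2) - b 0 (k+2) * b 1 (k+1))" for k
  define A0 where "A0 m k = (if m = k then 1 else if m = k+1 then X k else if m = k+2 then Y k else 0)" for m k
  have sol: "b 0 k + b 0 (k+1) * X k + b 0 (k+2) * Y k = 0 \<and> b 1 k + b 1 (k+1) * X k + b 1 (k+2) * Y k = 0" for k
    unfolding X_def Y_def by (rule lin_ex[OF det])
  have PA0: "P A0"
    unfolding P_def unit_lower_band2_def A0_def using sol by auto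
  have uniq: "A = A0" if "P A" for A
  proof (intro ext)
    fix m k
    have ub: "unit_lower_band2 A" and eq: "\<forall>i\<in>{0,1}. \<forall>k. b i k + b i (k+1) * A (k+1) k + b i (k+2) * A (k+2) k = 0"
      using that unfolding P_def by auto
    have xy: "A (k+1) k = X k \<and> A (k+2) k = Y k"
      using lin_uniq[of "b 0 (k+1)" "b 1 (k+2)" "b 0 (k+2)" "b 1 (k+1)" "b 0 k" "A (k+1) k" "A (k+2) k" "b 1 k" "X k" "Y k", OF det] eq sol[of k] by auto
    show "A m k = A0 m k"
      using ub xy unfolding unit_lower_band2_def A0_def by auto
  qed
  have bdA: "\<bar>A m k\<bar> \<le> 1" if "P A" for A m k
  proof -
    have ub: "unit_lower_band2 A" and eq: "\<forall>i\<in>{0,1}. \<forall>k. b i k + b i (k+1) * A (k+1) k + b i (k+2) * A (k+2) k = 0"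
      using that unfolding P_def by auto
    have "\<bar>A (k+1) k\<bar> \<le> 1 \<and> \<bar>A (k+2) k\<bar> \<le> 1" using bnd[of k] eq by auto
    thus ?thesis using ub unfolding unit_lower_band2_def
      by (cases "m = k \<or> m = k+1 \<or> m = k+2") auto
  qed
  show ?thesis
  proof
    show "\<exists>!A. P A" using PA0 uniq by blast
    show "\<forall>A. P A \<longrightarrow> l2_bounded A"
      using bdA l2b unfolding P_def by blast
  qed
qed

end
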